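(* Let $\mathcal{L}^*\supseteq\mathcal{L}$ be relational languages and let $\mathbf{K}$ be a Fraïssé $\mathcal{L}$-structure. Suppose $\mathbf{K}^*$ is a recurrent, precompact $\mathcal{L}^*$-expansion of $\mathbf{K}$ such that $\mathbf{K}^*\to(\mathbf{K}^* )^{\mathbf{A}^*}_2$ for every finite substructure $\mathbf{A}^*\subseteq\mathbf{K}^*$. Then $\mathbf{K}$ has finite big Ramsey degrees, and $\mathbf{K}^*$ is a (recurrent) big Ramsey structure for $\mathbf{K}$; in fact $\mathrm{BRD}(\mathbf{A},\mathbf{K})=|\mathbf{K}^*(\mathbf{A})|$ for every finite $\mathbf{A}\subseteq\mathbf{K}$.
   Context: For structures $\mathbf{A},\mathbf{B}$, $\mathrm{Emb}(\mathbf{A},\mathbf{B})$ is the set of embeddings. For structures $\mathbf{A}\le\mathbf{B}\le\mathbf{C}$, $\mathbf{C}\to(\mathbf{B})^{\mathbf{A}}_2$ means: for every coloring $\chi:\mathrm{Emb}(\mathbf{A},\mathbf{C})\to 2$ there is $g\in\mathrm{Emb}(\mathbf{B},\mathbf{C})$ with $\chi$ constant on $g\circ\mathrm{Emb}(\mathbf{A},\mathbf{B})$. An $\mathcal{L}^*$-expansion $\mathbf{M}^*$ of an $\mathcal{L}$-structure $\mathbf{M}$ is an $\mathcal{L}^*$-structure on the same set whose $\mathcal{L}$-reduct is $\mathbf{M}$. For finite $\mathbf{B}\le\mathbf{M}$, $\mathbf{M}^*(\mathbf{B})$ is the set of $\mathcal{L}^*$-expansions $\mathbf{B}^*$ of $\mathbf{B}$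 that embed into $\mathbf{M}^*$; $\mathbf{M}^*$ is precompact if $\mathbf{M}^*(\mathbf{B})$ is finite for every finite $\mathbf{B}\le\mathbf{M}$. For $f\in\mathrm{Emb}(\mathbf{B},\mathbf{M})$, $\mathbf{M}^*\cdot f$ is the unique $\mathbf{B}^*\in\mathbf{M}^*(\mathbf{B})$ with $f\in\mathrm{Emb}(\mathbf{B}^*,\mathbf{M}^* )$; for $\eta\in\mathrm{Emb}(\mathbf{M},\mathbf{M})$, $\mathbf{M}^*\cdot\eta$ is the expansion of $\mathbf{M}$ pulled back along $\eta$. $\mathbf{M}^*$ is recurrent if $\mathrm{Emb}(\mathbf{M}^*,\mathbf{M}^*\cdot\eta)\ne\emptyset$ for every $\eta\in\mathrm{Emb}(\mathbf{M},\mathbf{M})$. For finite $\mathbf{A}\le\mathbf{K}$, the big Ramsey degree $\mathrm{BRD}(\mathbf{A},\mathbf{K})$ is the least $t$ (if it exists) such that for every $r>t$ and $\chi:\mathrm{Emb}(\mathbf{A},\mathbf{K})\to r$ there is $g\in\mathrm{Emb}(\mathbf{K},\mathbf{K})$ with $|\chi[g\circ\mathrm{Emb}(\mathbf{A},\mathbf{K})]|\le t$; $\mathbf{K}$ has finite big Ramsey degrees if this is finite for all finite $\mathbf{A}\le\mathbf{K}$. A big Ramsey structure for $\mathbf{K}$ is an expansion $\mathbf{K}^*$ such that for every finite $\mathbf{A}\le\mathbf{K}$, $|\mathbf{K}^*(\mathbf{A})|=\mathrm{BRD}(\mathbf{A},\mathbf{K})$ and for every $g\in\mathrm{Emb}(\mathbf{K},\mathbf{K})$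 the coloring $f\mapsto\mathbf{K}^*\cdot f$ takes all $|\mathbf{K}^*(\mathbf{A})|$ values on $g\circ\mathrm{Emb}(\mathbf{A},\mathbf{K})$. *)

theory Defs
  imports Main "HOL-Library.FuncSet" "HOL-Library.Countable_Set"
begin

text \<open>A relational language is a set of relation symbols
  L :: 'r set together with an arity function ar :: 'r => nat (shared by L and its
  expansion language).\<close>

record ('a, 'r) struc =
  univ :: "'a set"
  rels :: "'r \<Rightarrow> 'a list set"

definition wf_struc :: "'r set \<Rightarrow> ('r \<Rightarrow> nat) \<Rightarrow> ('a, 'r) struc \<Rightarrow> bool" where
  "wf_struc L ar A \<longleftrightarrow>
     (\<forall>r. r \<notin> L \<longrightarrow> rels A r = {}) \<and>
     (\<forall>r\<in>L. \<forall>xs\<in>rels A r. length xs = ar r \<and> set xs \<subseteq> univ A)"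

definition reduct :: "'r set \<Rightarrow> ('a, 'r) struc \<Rightarrow> ('a, 'r) struc" where
  "reduct L A = \<lparr>univ = univ A, rels = (\<lambda>r. if r \<in> L then rels A r else {})\<rparr>"

definition Emb :: "'r set \<Rightarrow> ('r \<Rightarrow> nat) \<Rightarrow> ('a, 'r) struc \<Rightarrow> ('a, 'r) struc \<Rightarrow> ('a \<Rightarrow> 'a) set" where
  "Emb L ar A B = {f. f \<in> extensional (univ A) \<and> f ` univ A \<subseteq> univ B \<and> inj_on f (univ A) \<and>
     (\<forall>r\<in>L. \<forall>xs. set xs \<subseteq> univ A \<and> length xs = ar r \<longrightarrow>
        (xs \<in> rels A r \<longleftrightarrow> map f xs \<in> rels B r))}"

definition substr :: "'r set \<Rightarrow> ('r \<Rightarrow> nat) \<Rightarrow> ('a, 'r) struc \<Rightarrow> ('a, 'r) struc \<Rightarrow> bool" where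
  "substr L ar A B \<longleftrightarrow> wf_struc L ar A \<and> univ A \<subseteq> univ B \<and>
     (\<forall>r\<in>L. rels A r = {xs \<in> rels B r. set xs \<subseteq> univ A})"

definition ultrahomogeneous :: "'r set \<Rightarrow> ('r \<Rightarrow> nat) \<Rightarrow> ('a, 'r) struc \<Rightarrow> bool" where
  "ultrahomogeneous L ar K \<longleftrightarrow>
     (\<forall>A B h. substr L ar A K \<and> substr L ar B K \<and> finite (univ A) \<and>
        h \<in> Emb L ar A B \<and> h ` univ A = univ B \<longrightarrow>
        (\<exists>\<sigma>\<in>Emb L ar K K. \<sigma> ` univ K = univ K \<and> (\<forall>x\<in>univ A. \<sigma> x = h x)))"

definition fraisse :: "'r set \<Rightarrow> ('r \<Rightarrow> nat) \<Rightarrow> ('a, 'r) struc \<Rightarrow> bool" where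
  "fraisse L ar K \<longleftrightarrow> wf_struc L ar K \<and> countable (univ K) \<and> infinite (univ K) \<and>
     ultrahomogeneous L ar K"

definition expansion :: "'r set \<Rightarrow> 'r set \<Rightarrow> ('r \<Rightarrow> nat) \<Rightarrow> ('a, 'r) struc \<Rightarrow> ('a, 'r) struc \<Rightarrow> bool" where
  "expansion L Lstar ar Ms M \<longleftrightarrow> wf_struc Lstar ar Ms \<and> reduct L Ms = M"

definition expansions_in :: "'r set \<Rightarrow> 'r set \<Rightarrow> ('r \<Rightarrow> nat) \<Rightarrow> ('a, 'r) struc \<Rightarrow> ('a, 'r) struc
    \<Rightarrow> ('a, 'r) struc set" where
  "expansions_in L Lstar ar Ms B =
     {Bs. expansion L Lstar ar Bs B \<and> Emb Lstar ar Bs Ms \<noteq> {}}"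

definition pullback :: "'r set \<Rightarrow> ('r \<Rightarrow> nat) \<Rightarrow> ('a, 'r) struc \<Rightarrow> ('a, 'r) struc \<Rightarrow> ('a \<Rightarrow> 'a)
    \<Rightarrow> ('a, 'r) struc" where
  "pullback Lstar ar Ms B f = \<lparr>univ = univ B,
     rels = (\<lambda>r. if r \<in> Lstar then
        {xs. length xs = ar r \<and> set xs \<subseteq> univ B \<and> map f xs \<in> rels Ms r} else {})\<rparr>"

definition precompact :: "'r set \<Rightarrow> 'r set \<Rightarrow> ('r \<Rightarrow> nat) \<Rightarrow> ('a, 'r) struc \<Rightarrow> ('a, 'r) struc \<Rightarrow> bool" where
  "precompact L Lstar ar Ms M \<longleftrightarrow>
     (\<forall>B. substr L ar B M \<and> finite (univ B) \<longrightarrow> finite (expansions_in L Lstar ar Ms B))"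

definition recurrent :: "'r set \<Rightarrow> 'r set \<Rightarrow> ('r \<Rightarrow> nat) \<Rightarrow> ('a, 'r) struc \<Rightarrow> ('a, 'r) struc \<Rightarrow> bool" where
  "recurrent L Lstar ar Ms M \<longleftrightarrow>
     (\<forall>\<eta>\<in>Emb L ar M M. Emb Lstar ar Ms (pullback Lstar ar Ms M \<eta>) \<noteq> {})"

definition arrow2 :: "'r set \<Rightarrow> ('r \<Rightarrow> nat) \<Rightarrow> ('a, 'r) struc \<Rightarrow> ('a, 'r) struc \<Rightarrow> ('a, 'r) struc \<Rightarrow> bool" where
  "arrow2 L ar C B A \<longleftrightarrow>
     (\<forall>\<chi> \<in> Emb L ar A C \<rightarrow> {..<(2::nat)}. \<exists>g\<in>Emb L ar B C. \<exists>c.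
        \<forall>f\<in>Emb L ar A B. \<chi> (compose (univ A) g f) = c)"

definition brd_bound :: "'r set \<Rightarrow> ('r \<Rightarrow> nat) \<Rightarrow> ('a, 'r) struc \<Rightarrow> ('a, 'r) struc \<Rightarrow> nat \<Rightarrow> bool" where
  "brd_bound L ar K A t \<longleftrightarrow>
     (\<forall>r>t. \<forall>\<chi> \<in> Emb L ar A K \<rightarrow> {..<r}. \<exists>g\<in>Emb L ar K K.
        card (\<chi> ` ((\<lambda>f. compose (univ A) g f) ` Emb L ar A K)) \<le> t)"

definition BRD :: "'r set \<Rightarrow> ('r \<Rightarrow> nat) \<Rightarrow> ('a, 'r) struc \<Rightarrow> ('a, 'r) struc \<Rightarrow> nat" where
  "BRD L ar A K = (LEAST t. brd_bound L ar K A t)"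

definition finite_BRD :: "'r set \<Rightarrow> ('r \<Rightarrow> nat) \<Rightarrow> ('a, 'r) struc \<Rightarrow> bool" where
  "finite_BRD L ar K \<longleftrightarrow>
     (\<forall>A. substr L ar A K \<and> finite (univ A) \<longrightarrow> (\<exists>t. brd_bound L ar K A t))"

definition big_ramsey_structure :: "'r set \<Rightarrow> 'r set \<Rightarrow> ('r \<Rightarrow> nat) \<Rightarrow> ('a, 'r) struc \<Rightarrow> ('a, 'r) struc \<Rightarrow> bool" where
  "big_ramsey_structure L Lstar ar Ks K \<longleftrightarrow> expansion L Lstar ar Ks K \<and>
     (\<forall>A. substr L ar A K \<and> finite (univ A) \<longrightarrow>
        card (expansions_in L Lstar ar Ks A) = BRD L ar A K \<and>
        (\<forall>g\<in>Emb L ar K K.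
           expansions_in L Lstar ar Ks A \<subseteq>
             (\<lambda>f. pullback Lstar ar Ks A f) ` ((\<lambda>f. compose (univ A) g f) ` Emb L ar A K)))"

end

theory Submission
  imports Defs
begin

lemma map_compose: "set xs \<subseteq> A \<Longrightarrow> map (compose A g f) xs = map g (map f xs)"
  by (induction xs) (auto simp: compose_eq)

lemma emb_compose:
  assumes f: "f \<in> Emb L ar A B" and g: "g \<in> Emb L ar B C"
  shows "compose (univ A) g f \<in> Emb L ar A C"
proof -
  have fi: "f ` univ A \<subseteq> univ B" "inj_on f (univ A)"
    and fr: "\<And>r xs. r \<in> L \<Longrightarrow> set xs \<subseteq> univ A \<Longrightarrow> length xs = ar r \<Longrightarrow>
        (xs \<in> rels A r \<longleftrightarrow> map f xs \<in> rels B r)"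
    using f unfolding Emb_def by auto
  have gi: "g ` univ B \<subseteq> univ C" "inj_on g (univ B)"
    and gr: "\<And>r xs. r \<in> L \<Longrightarrow> set xs \<subseteq> univ B \<Longrightarrow> length xs = ar r \<Longrightarrow>
        (xs \<in> rels B r \<longleftrightarrow> map g xs \<in> rels C r)"
    using g unfolding Emb_def by auto
  have "compose (univ A) g f ` univ A \<subseteq> univ C" using fi gi by (auto simp: compose_eq image_subset_iff)
  moreover have "inj_on (compose (univ A) g f) (univ A)"
    using fi gi unfolding inj_on_def by (auto simp: compose_eq image_subset_iff)
  moreover have "(xs \<in> rels A r \<longleftrightarrow> map (compose (univ A) g f) xs \<in> rels C r)"
    if "r \<in> L" "set xs \<subseteq> univ A" "length xs = ar r" for r xs
  proof -
    have "set (map f xs) \<subseteq> univ B" using that fi by auto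
    then show ?thesis using that fr gr[of r "map f xs"] by (simp add: map_compose)
  qed
  ultimately show ?thesis unfolding Emb_def by auto
qed

lemma emb_cancel:
  assumes h: "compose (univ A) g f \<in> Emb L ar A C" and g: "g \<in> Emb L ar B C"
    and fe: "f \<in> extensional (univ A)" and fi: "f ` univ A \<subseteq> univ B"
  shows "f \<in> Emb L ar A B"
proof -
  have hi: "inj_on (compose (univ A) g f) (univ A)"
    and hr: "\<And>r xs. r \<in> L \<Longrightarrow> set xs \<subseteq> univ A \<Longrightarrow> length xs = ar r \<Longrightarrow>
        (xs \<in> rels A r \<longleftrightarrow> map (compose (univ A) g f) xs \<in> rels C r)"
    using h unfolding Emb_def by auto
  have gr: "\<And>r xs. r \<in> L \<Longrightarrow> set xs \<subseteq> univ B \<Longrightarrow> length xs = ar r \<Longrightarrow>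
        (xs \<in> rels B r \<longleftrightarrow> map g xs \<in> rels C r)"
    using g unfolding Emb_def by auto
  have "inj_on f (univ A)" using hi unfolding inj_on_def by (metis compose_eq)
  moreover have "(xs \<in> rels A r \<longleftrightarrow> map f xs \<in> rels B r)"
    if "r \<in> L" "set xs \<subseteq> univ A" "length xs = ar r" for r xs
  proof -
    have "set (map f xs) \<subseteq> univ B" using that fi by auto
    then show ?thesis using that hr gr[of r "map f xs"] by (simp add: map_compose)
  qed
  ultimately show ?thesis using fe fi unfolding Emb_def by auto
qed

lemma emb_reduct:
  assumes "L \<subseteq> Lstar" "f \<in> Emb Lstar ar B C"
  shows "f \<in> Emb L ar (reduct L B) (reduct L C)"
  using assms unfolding Emb_def reduct_def by auto

lemma emb_id: "(\<lambda>x\<in>univ A. x) \<in> Emb L ar A A"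
proof -
  have "map (\<lambda>x\<in>univ A. x) xs = xs" if "set xs \<subseteq> univ A" for xs
    using that by (induction xs) auto
  then show ?thesis unfolding Emb_def by auto
qed

lemma emb_id_compose: "f \<in> Emb L ar A B \<Longrightarrow> compose (univ A) (\<lambda>y\<in>univ B. y) f = f"
  by (rule Id_compose) (unfold Emb_def, blast+)

lemma emb_funcset: "f \<in> Emb L ar A B \<Longrightarrow> f \<in> univ A \<rightarrow> univ B"
  unfolding Emb_def by blast

lemma pullback_emb:
  assumes w: "wf_struc Lstar ar B" and h: "h \<in> Emb Lstar ar B Ks" and u: "univ B = univ A"
  shows "pullback Lstar ar Ks A h = B"
proof -
  have wr: "\<And>r. r \<notin> Lstar \<Longrightarrow> rels B r = {}"
    and wl: "\<And>r xs. r \<in> Lstar \<Longrightarrow> xs \<in> rels B r \<Longrightarrow> length xs = ar r \<and> set xs \<subseteq> univ B"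
    using w unfolding wf_struc_def by auto
  have hr: "\<And>r xs. r \<in> Lstar \<Longrightarrow> set xs \<subseteq> univ B \<Longrightarrow> length xs = ar r \<Longrightarrow>
        (xs \<in> rels B r \<longleftrightarrow> map h xs \<in> rels Ks r)"
    using h unfolding Emb_def by blast
  have "rels (pullback Lstar ar Ks A h) r = rels B r" for r
  proof (cases "r \<in> Lstar")
    case True
    have "rels (pullback Lstar ar Ks A h) r =
       {xs. length xs = ar r \<and> set xs \<subseteq> univ A \<and> map h xs \<in> rels Ks r}"
      using True unfolding pullback_def by simp
    also have "\<dots> = rels B r"
    proof (intro set_eqI iffI)
      fix xs assume "xs \<in> {xs. length xs = ar r \<and> set xs \<subseteq> univ A \<and> map h xs \<in> rels Ks r}"
      then show "xs \<in> rels B r" using hr[OF True] u by auto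
    next
      fix xs assume "xs \<in> rels B r"
      then show "xs \<in> {xs. length xs = ar r \<and> set xs \<subseteq> univ A \<and> map h xs \<in> rels Ks r}"
        using hr[OF True] wl[OF True] u by auto
    qed
    finally show ?thesis .
  next
    case False
    then show ?thesis using wr unfolding pullback_def by simp
  qed
  then have "rels (pullback Lstar ar Ks A h) = rels B" by blast
  moreover have "univ (pullback Lstar ar Ks A h) = univ B" using u by (simp add: pullback_def)
  ultimately show ?thesis by (intro struc.equality) simp_all
qed

definition rams :: "'r set \<Rightarrow> ('r \<Rightarrow> nat) \<Rightarrow> ('a, 'r) struc \<Rightarrow> ('a, 'r) struc \<Rightarrow> nat \<Rightarrow> bool" where
  "rams L ar M B n \<longleftrightarrow> (\<forall>\<chi> \<in> Emb L ar B M \<rightarrow> {..<n}. \<exists>g\<in>Emb L ar M M. \<exists>c.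
      \<forall>f\<in>Emb L ar B M. \<chi> (compose (univ B) g f) = c)"

lemma arrow2_rams: "arrow2 L ar M M B = rams L ar M B 2"
  by (simp add: arrow2_def rams_def)

lemma compose_emb_assoc:
  assumes "f \<in> Emb L ar B M"
  shows "compose (univ B) (compose (univ M) g1 g2) f = compose (univ B) g1 (compose (univ B) g2 f)"
  using compose_assoc[OF emb_funcset[OF assms]] by (rule sym)

lemma rams_many:
  assumes two: "rams L ar M B 2"
  shows "rams L ar M B n"
proof (induction n)
  case 0
  show ?case unfolding rams_def
  proof (intro ballI)
    fix \<chi> assume "\<chi> \<in> Emb L ar B M \<rightarrow> {..<(0::nat)}"
    then have "Emb L ar B M = {}" by auto
    then show "\<exists>g\<in>Emb L ar M M. \<exists>c. \<forall>f\<in>Emb L ar B M. \<chi> (compose (univ B) g f) = c"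
      using emb_id by blast
  qed
next
  case (Suc n)
  show ?case unfolding rams_def
  proof (intro ballI)
    fix \<chi> assume chi: "\<chi> \<in> Emb L ar B M \<rightarrow> {..<Suc n}"
    define \<chi>1 where "\<chi>1 = (\<lambda>f. if \<chi> f = n then 1 else (0::nat))"
    have "\<chi>1 \<in> Emb L ar B M \<rightarrow> {..<2}" unfolding \<chi>1_def by auto
    then obtain g1 c1 where g1: "g1 \<in> Emb L ar M M"
      and c1: "\<forall>f\<in>Emb L ar B M. \<chi>1 (compose (univ B) g1 f) = c1"
      using two unfolding rams_def by blast
    show "\<exists>g\<in>Emb L ar M M. \<exists>c. \<forall>f\<in>Emb L ar B M. \<chi> (compose (univ B) g f) = c"
    proof (cases "c1 = 1")
      case True
      then have "\<forall>f\<in>Emb L ar B M. \<chi> (compose (univ B) g1 f) = n"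
        using c1 unfolding \<chi>1_def by (metis zero_neq_one)
      then show ?thesis using g1 by blast
    next
      case False
      then have ne: "\<forall>f\<in>Emb L ar B M. \<chi> (compose (univ B) g1 f) \<noteq> n"
        using c1 unfolding \<chi>1_def by auto
      define \<chi>2 where "\<chi>2 = (\<lambda>f. \<chi> (compose (univ B) g1 f))"
      have "\<chi>2 \<in> Emb L ar B M \<rightarrow> {..<n}"
      proof
        fix f assume f: "f \<in> Emb L ar B M"
        then have "compose (univ B) g1 f \<in> Emb L ar B M" using emb_compose g1 by blast
        then have "\<chi> (compose (univ B) g1 f) < Suc n" using chi by auto
        then show "\<chi>2 f \<in> {..<n}" using ne f unfolding \<chi>2_def by auto
      qed
      then obtain g2 c2 where g2: "g2 \<in> Emb L ar M M"
        and c2: "\<forall>f\<in>Emb L ar B M. \<chi>2 (compose (univ B) g2 f) = c2"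
        using Suc.IH unfolding rams_def by blast
      have "compose (univ M) g1 g2 \<in> Emb L ar M M" using emb_compose g1 g2 by blast
      moreover have "\<forall>f\<in>Emb L ar B M. \<chi> (compose (univ B) (compose (univ M) g1 g2) f) = c2"
        using c2 compose_emb_assoc unfolding \<chi>2_def by metis
      ultimately show ?thesis by blast
    qed
  qed
qed

lemma rams_finite_set:
  assumes "finite S"
  shows "(\<forall>B\<in>S. rams L ar M B r) \<Longrightarrow> (\<forall>B\<in>S. \<forall>f\<in>Emb L ar B M. \<chi> f < r) \<Longrightarrow>
    \<exists>h\<in>Emb L ar M M. \<forall>B\<in>S. \<exists>c. \<forall>f\<in>Emb L ar B M. \<chi> (compose (univ B) h f) = c"
  using assms
proof (induction S rule: finite_induct)
  case empty
  then show ?case using emb_id by blast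
next
  case (insert B S)
  then obtain h where h: "h \<in> Emb L ar M M"
    and hS: "\<forall>B\<in>S. \<exists>c. \<forall>f\<in>Emb L ar B M. \<chi> (compose (univ B) h f) = c"
    by blast
  define \<chi>' where "\<chi>' = (\<lambda>f. \<chi> (compose (univ B) h f))"
  have "\<chi>' \<in> Emb L ar B M \<rightarrow> {..<r}"
  proof
    fix f assume "f \<in> Emb L ar B M"
    then have "compose (univ B) h f \<in> Emb L ar B M" using emb_compose h by blast
    then show "\<chi>' f \<in> {..<r}" using insert.prems(2) unfolding \<chi>'_def by auto
  qed
  then obtain g c where g: "g \<in> Emb L ar M M"
    and c: "\<forall>f\<in>Emb L ar B M. \<chi>' (compose (univ B) g f) = c"
    using insert.prems(1) unfolding rams_def by blast
  have h': "compose (univ M) h g \<in> Emb L ar M M" using emb_compose g h by blast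
  have "\<forall>B'\<in>insert B S. \<exists>c. \<forall>f\<in>Emb L ar B' M. \<chi> (compose (univ B') (compose (univ M) h g) f) = c"
  proof
    fix B' assume B': "B' \<in> insert B S"
    show "\<exists>c. \<forall>f\<in>Emb L ar B' M. \<chi> (compose (univ B') (compose (univ M) h g) f) = c"
    proof (cases "B' = B")
      case True
      then show ?thesis using c compose_emb_assoc unfolding \<chi>'_def by metis
    next
      case False
      then have "B' \<in> S" using B' by auto
      then obtain c' where c': "\<forall>f\<in>Emb L ar B' M. \<chi> (compose (univ B') h f) = c'"
        using hS by blast
      have "\<forall>f\<in>Emb L ar B' M. \<chi> (compose (univ B') (compose (univ M) h g) f) = c'"
      proof
        fix f assume f: "f \<in> Emb L ar B' M"
        then have "compose (univ B') g f \<in> Emb L ar B' M" using emb_compose g by blast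
        then show "\<chi> (compose (univ B') (compose (univ M) h g) f) = c'"
          using c' compose_emb_assoc[OF f] by metis
      qed
      then show ?thesis by blast
    qed
  qed
  then show ?case using h' by blast
qed

lemma rams_transfer:
  assumes a: "a \<in> Emb L ar B M" and fin: "finite (univ B)" and wM: "wf_struc L ar M"
    and arr: "\<forall>As. substr L ar As M \<and> finite (univ As) \<longrightarrow> arrow2 L ar M M As"
  shows "rams L ar M B 2"
proof -
  have ae: "a \<in> extensional (univ B)" and ai: "a ` univ B \<subseteq> univ M" "inj_on a (univ B)"
    and ar: "\<And>r xs. r \<in> L \<Longrightarrow> set xs \<subseteq> univ B \<Longrightarrow> length xs = ar r \<Longrightarrow>
        (xs \<in> rels B r \<longleftrightarrow> map a xs \<in> rels M r)"
    using a unfolding Emb_def by blast+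
  have wM1: "\<And>r xs. r \<in> L \<Longrightarrow> xs \<in> rels M r \<Longrightarrow> length xs = ar r"
    using wM unfolding wf_struc_def by blast
  define D :: "('a, 'b) struc" where "D = \<lparr>univ = a ` univ B,
     rels = (\<lambda>r. if r \<in> L then {xs \<in> rels M r. set xs \<subseteq> a ` univ B} else {})\<rparr>"
  have uD: "univ D = a ` univ B" unfolding D_def by simp
  have rD: "\<And>r. r \<in> L \<Longrightarrow> rels D r = {xs \<in> rels M r. set xs \<subseteq> a ` univ B}"
    unfolding D_def by simp
  have "wf_struc L ar D" unfolding wf_struc_def using wM1 by (auto simp: D_def)
  then have "substr L ar D M" unfolding substr_def using uD rD ai by auto
  moreover have "finite (univ D)" using uD fin by simp
  ultimately have rD2: "rams L ar M D 2" using arr arrow2_rams by blast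
  have aD: "a \<in> Emb L ar B D"
  proof -
    have "(xs \<in> rels B r \<longleftrightarrow> map a xs \<in> rels D r)"
      if "r \<in> L" "set xs \<subseteq> univ B" "length xs = ar r" for r xs
      using ar[OF that] rD[OF that(1)] that(2) by auto
    then show ?thesis unfolding Emb_def using ae ai uD by auto
  qed
  define b where "b = (\<lambda>y\<in>univ D. inv_into (univ B) a y)"
  have bD: "b \<in> Emb L ar D B"
  proof -
    have be: "b \<in> extensional (univ D)" unfolding b_def by simp
    have bi: "b ` univ D \<subseteq> univ B" unfolding b_def uD by (auto intro: inv_into_into)
    have ab: "\<And>y. y \<in> univ D \<Longrightarrow> a (b y) = y" unfolding b_def uD by (simp add: f_inv_into_f)
    have binj: "inj_on b (univ D)" by (metis ab inj_onI)
    have mab: "map a (map b ys) = ys" if "set ys \<subseteq> univ D" for ys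
      using that ab by (induction ys) auto
    have "(ys \<in> rels D r \<longleftrightarrow> map b ys \<in> rels B r)"
      if "r \<in> L" "set ys \<subseteq> univ D" "length ys = ar r" for r ys
    proof -
      have "set (map b ys) \<subseteq> univ B" using bi that(2) by auto
      then have "map b ys \<in> rels B r \<longleftrightarrow> map a (map b ys) \<in> rels M r"
        using ar[OF that(1)] that(3) by simp
      then show ?thesis using mab[OF that(2)] rD[OF that(1)] that(2) uD by auto
    qed
    then show ?thesis unfolding Emb_def using be bi binj by auto
  qed
  have ba: "\<And>x. x \<in> univ B \<Longrightarrow> b (a x) = x"
    unfolding b_def uD using ai(2) by simp
  show ?thesis unfolding rams_def
  proof (intro ballI)
    fix \<chi> assume chi: "\<chi> \<in> Emb L ar B M \<rightarrow> {..<(2::nat)}"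
    define \<chi>' where "\<chi>' = (\<lambda>\<phi>. \<chi> (compose (univ B) \<phi> a))"
    have "\<chi>' \<in> Emb L ar D M \<rightarrow> {..<2}"
    proof
      fix \<phi> assume "\<phi> \<in> Emb L ar D M"
      then have "compose (univ B) \<phi> a \<in> Emb L ar B M" using emb_compose aD by blast
      then show "\<chi>' \<phi> \<in> {..<2}" using chi unfolding \<chi>'_def by auto
    qed
    then obtain g c where g: "g \<in> Emb L ar M M"
      and c: "\<forall>\<phi>\<in>Emb L ar D M. \<chi>' (compose (univ D) g \<phi>) = c"
      using rD2 unfolding rams_def by blast
    have "\<forall>f\<in>Emb L ar B M. \<chi> (compose (univ B) g f) = c"
    proof
      fix f assume f: "f \<in> Emb L ar B M"
      have \<phi>: "compose (univ D) f b \<in> Emb L ar D M" using emb_compose bD f by blast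
      have "compose (univ B) (compose (univ D) g (compose (univ D) f b)) a = compose (univ B) g f"
      proof
        fix x show "compose (univ B) (compose (univ D) g (compose (univ D) f b)) a x = compose (univ B) g f x"
        proof (cases "x \<in> univ B")
          case True
          then have "a x \<in> univ D" using uD by simp
          then show ?thesis using True ba by (simp add: compose_eq)
        next
          case False
          then show ?thesis by (simp add: compose_def)
        qed
      qed
      then show "\<chi> (compose (univ B) g f) = c" using c \<phi> unfolding \<chi>'_def by metis
    qed
    then show "\<exists>g\<in>Emb L ar M M. \<exists>c. \<forall>f\<in>Emb L ar B M. \<chi> (compose (univ B) g f) = c"
      using g by blast
  qed
qed

lemma emb_pullback_self:
  assumes "g \<in> extensional (univ X)" "g ` univ X \<subseteq> univ Ks" "inj_on g (univ X)"
  shows "g \<in> Emb Lstar ar (pullback Lstar ar Ks X g) Ks"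
  using assms unfolding Emb_def pullback_def by auto

lemma pullback_in:
  assumes LL: "L \<subseteq> Lstar" and wA: "wf_struc L ar A" and f: "f \<in> Emb L ar A K"
    and red: "reduct L Ks = K"
  shows "pullback Lstar ar Ks A f \<in> expansions_in L Lstar ar Ks A \<and>
    f \<in> Emb Lstar ar (pullback Lstar ar Ks A f) Ks"
proof -
  let ?P = "pullback Lstar ar Ks A f"
  have uK: "univ K = univ Ks" using red unfolding reduct_def by auto
  have rK: "\<And>r. r \<in> L \<Longrightarrow> rels K r = rels Ks r" using red unfolding reduct_def by auto
  have fe: "f \<in> extensional (univ A)" and fi: "f ` univ A \<subseteq> univ K" "inj_on f (univ A)"
    and fr: "\<And>r xs. r \<in> L \<Longrightarrow> set xs \<subseteq> univ A \<Longrightarrow> length xs = ar r \<Longrightarrow>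
        (xs \<in> rels A r \<longleftrightarrow> map f xs \<in> rels K r)"
    using f unfolding Emb_def by blast+
  have wA1: "\<And>r. r \<notin> L \<Longrightarrow> rels A r = {}"
    and wA2: "\<And>r xs. r \<in> L \<Longrightarrow> xs \<in> rels A r \<Longrightarrow> length xs = ar r \<and> set xs \<subseteq> univ A"
    using wA unfolding wf_struc_def by blast+
  have e: "f \<in> Emb Lstar ar ?P Ks"
    using emb_pullback_self[of f A Ks] fe fi uK by (simp add: pullback_def)
  have w: "wf_struc Lstar ar ?P" unfolding wf_struc_def pullback_def by auto
  have "rels (reduct L ?P) r = rels A r" for r
  proof (cases "r \<in> L")
    case True
    then have "r \<in> Lstar" using LL by auto
    then have "rels (reduct L ?P) r = {xs. length xs = ar r \<and> set xs \<subseteq> univ A \<and> map f xs \<in> rels K r}"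
      using True rK unfolding reduct_def pullback_def by simp
    also have "\<dots> = rels A r" using fr[OF True] wA2[OF True] by blast
    finally show ?thesis .
  next
    case False
    then show ?thesis using wA1 unfolding reduct_def by simp
  qed
  then have "reduct L ?P = A"
    by (intro struc.equality) (auto simp: reduct_def pullback_def fun_eq_iff)
  then show ?thesis using e w unfolding expansions_in_def expansion_def by blast
qed

lemma main_A:
  assumes LL: "L \<subseteq> Lstar"
    and wK: "wf_struc L ar K"
    and exp: "expansion L Lstar ar Ks K"
    and rec: "recurrent L Lstar ar Ks K"
    and pre: "precompact L Lstar ar Ks K"
    and ram: "\<forall>As. substr Lstar ar As Ks \<and> finite (univ As) \<longrightarrow> arrow2 Lstar ar Ks Ks As"
    and sA: "substr L ar A K" and fA: "finite (univ A)"
  defines "E \<equiv> expansions_in L Lstar ar Ks A"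
  shows "brd_bound L ar K A (card E) \<and>
    (\<forall>g\<in>Emb L ar K K. E \<subseteq> (\<lambda>f. pullback Lstar ar Ks A f) ` ((\<lambda>f. compose (univ A) g f) ` Emb L ar A K)) \<and>
    BRD L ar A K = card E"
proof -
  have wKs: "wf_struc Lstar ar Ks" and red: "reduct L Ks = K" using exp unfolding expansion_def by auto
  have wA: "wf_struc L ar A" using sA unfolding substr_def by blast
  have finE: "finite E" using pre sA fA unfolding precompact_def E_def by blast
  have P1: "f \<in> Emb L ar A K" if "B \<in> E" "f \<in> Emb Lstar ar B Ks" for B f
  proof -
    have "reduct L B = A" using that(1) unfolding E_def expansions_in_def expansion_def by blast
    then show ?thesis using emb_reduct[OF LL that(2)] red by simp
  qed
  have uB: "univ B = univ A" if "B \<in> E" for B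
  proof -
    have "reduct L B = A" using that(1) unfolding E_def expansions_in_def expansion_def by blast
    then show ?thesis unfolding reduct_def by auto
  qed
  have P2: "pullback Lstar ar Ks A f \<in> E \<and> f \<in> Emb Lstar ar (pullback Lstar ar Ks A f) Ks"
    if "f \<in> Emb L ar A K" for f
    using pullback_in[OF LL wA that red] unfolding E_def by blast
  have P3: "pullback Lstar ar Ks A f = B" if "B \<in> E" "f \<in> Emb Lstar ar B Ks" for B f
  proof -
    have "wf_struc Lstar ar B" using that(1) unfolding E_def expansions_in_def expansion_def by blast
    then show ?thesis using pullback_emb that uB by blast
  qed
  have embK: "h \<in> Emb L ar K K" if "h \<in> Emb Lstar ar Ks Ks" for h
    using emb_reduct[OF LL that] red by simp
  have uK: "univ K = univ Ks" using red unfolding reduct_def by auto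
  have ub: "brd_bound L ar K A (card E)" unfolding brd_bound_def
  proof (intro allI impI ballI)
    fix r \<chi> assume r: "card E < r" and chi: "\<chi> \<in> Emb L ar A K \<rightarrow> {..<r}"
    have rB: "\<forall>B\<in>E. rams Lstar ar Ks B r"
    proof
      fix B assume B: "B \<in> E"
      then obtain a where a: "a \<in> Emb Lstar ar B Ks" unfolding E_def expansions_in_def by blast
      have "finite (univ B)" using uB[OF B] fA by simp
      then show "rams Lstar ar Ks B r" using rams_transfer[OF a _ wKs ram] rams_many by blast
    qed
    have cB: "\<forall>B\<in>E. \<forall>f\<in>Emb Lstar ar B Ks. \<chi> f < r" using P1 chi by blast
    obtain h where h: "h \<in> Emb Lstar ar Ks Ks"
      and hc: "\<forall>B\<in>E. \<exists>c. \<forall>f\<in>Emb Lstar ar B Ks. \<chi> (compose (univ B) h f) = c"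
      using rams_finite_set[OF finE rB cB] by blast
    obtain cf where cf: "\<forall>B\<in>E. \<forall>f\<in>Emb Lstar ar B Ks. \<chi> (compose (univ B) h f) = cf B"
      using hc by metis
    have "\<chi> ` ((\<lambda>f. compose (univ A) h f) ` Emb L ar A K) \<subseteq> cf ` E"
    proof
      fix y assume "y \<in> \<chi> ` ((\<lambda>f. compose (univ A) h f) ` Emb L ar A K)"
      then obtain f where f: "f \<in> Emb L ar A K" and y: "y = \<chi> (compose (univ A) h f)" by blast
      let ?B = "pullback Lstar ar Ks A f"
      have "?B \<in> E" "f \<in> Emb Lstar ar ?B Ks" using P2[OF f] by auto
      then have "\<chi> (compose (univ ?B) h f) = cf ?B" using cf by blast
      then show "y \<in> cf ` E" using y uB[OF \<open>?B \<in> E\<close>] \<open>?B \<in> E\<close> by auto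
    qed
    then have "card (\<chi> ` ((\<lambda>f. compose (univ A) h f) ` Emb L ar A K)) \<le> card (cf ` E)"
      using finE by (simp add: card_mono)
    also have "\<dots> \<le> card E" by (rule card_image_le[OF finE])
    finally show "\<exists>g\<in>Emb L ar K K. card (\<chi> ` ((\<lambda>f. compose (univ A) g f) ` Emb L ar A K)) \<le> card E"
      using embK[OF h] by blast
  qed
  have cov: "\<forall>g\<in>Emb L ar K K. E \<subseteq> (\<lambda>f. pullback Lstar ar Ks A f) ` ((\<lambda>f. compose (univ A) g f) ` Emb L ar A K)"
  proof (intro ballI subsetI)
    fix g B assume g: "g \<in> Emb L ar K K" and B: "B \<in> E"
    let ?P = "pullback Lstar ar Ks K g"
    obtain e where e: "e \<in> Emb Lstar ar Ks ?P" using rec g unfolding recurrent_def by blast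
    obtain a where a: "a \<in> Emb Lstar ar B Ks" using B unfolding E_def expansions_in_def by blast
    define f where "f = compose (univ B) e a"
    have fP: "f \<in> Emb Lstar ar B ?P" unfolding f_def using emb_compose a e by blast
    have ge: "g \<in> extensional (univ K)" "g ` univ K \<subseteq> univ K" "inj_on g (univ K)"
      using g unfolding Emb_def by blast+
    have gP: "g \<in> Emb Lstar ar ?P Ks"
      using emb_pullback_self[of g K Ks] ge uK by simp
    have gf: "compose (univ B) g f \<in> Emb Lstar ar B Ks" using emb_compose fP gP by blast
    then have gfA: "compose (univ A) g f \<in> Emb L ar A K" using P1[OF B] uB[OF B] by simp
    have uP: "univ ?P = univ K" by (simp add: pullback_def)
    have fe0: "f \<in> extensional (univ B)" and fi0: "f ` univ B \<subseteq> univ ?P"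
      using fP unfolding Emb_def by blast+
    have fe: "f \<in> extensional (univ A)" and fi: "f ` univ A \<subseteq> univ K"
      using fe0 fi0 uB[OF B] uP by simp_all
    have fA': "f \<in> Emb L ar A K" using emb_cancel[OF gfA g fe fi] .
    have "pullback Lstar ar Ks A (compose (univ A) g f) = B" using P3[OF B] gf uB[OF B] by simp
    then show "B \<in> (\<lambda>f. pullback Lstar ar Ks A f) ` ((\<lambda>f. compose (univ A) g f) ` Emb L ar A K)"
      using fA' by blast
  qed
  have lb: "\<not> brd_bound L ar K A t" if t: "t < card E" for t
  proof
    assume bb: "brd_bound L ar K A t"
    obtain idx where idx: "bij_betw idx E {0..<card E}" using ex_bij_betw_finite_nat[OF finE] by blast
    define \<chi> where "\<chi> = (\<lambda>f. idx (pullback Lstar ar Ks A f))"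
    have chi: "\<chi> \<in> Emb L ar A K \<rightarrow> {..<card E}"
    proof
      fix f assume "f \<in> Emb L ar A K"
      then have "pullback Lstar ar Ks A f \<in> E" using P2 by blast
      then show "\<chi> f \<in> {..<card E}" using idx unfolding \<chi>_def bij_betw_def by auto
    qed
    have "\<forall>r>t. \<forall>\<chi> \<in> Emb L ar A K \<rightarrow> {..<r}. \<exists>g\<in>Emb L ar K K.
        card (\<chi> ` ((\<lambda>f. compose (univ A) g f) ` Emb L ar A K)) \<le> t"
      using bb unfolding brd_bound_def .
    then have "\<exists>g\<in>Emb L ar K K. card (\<chi> ` ((\<lambda>f. compose (univ A) g f) ` Emb L ar A K)) \<le> t"
      using t chi by blast
    then obtain g where g: "g \<in> Emb L ar K K"
      and cg: "card (\<chi> ` ((\<lambda>f. compose (univ A) g f) ` Emb L ar A K)) \<le> t"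
      by blast
    have sub1: "\<chi> ` ((\<lambda>f. compose (univ A) g f) ` Emb L ar A K) \<subseteq> {..<card E}"
    proof
      fix y assume "y \<in> \<chi> ` ((\<lambda>f. compose (univ A) g f) ` Emb L ar A K)"
      then obtain f where f: "f \<in> Emb L ar A K" and y: "y = \<chi> (compose (univ A) g f)" by blast
      have "compose (univ A) g f \<in> Emb L ar A K" using emb_compose[OF f g] .
      then show "y \<in> {..<card E}" using chi y by blast
    qed
    have "{0..<card E} = idx ` E" using idx unfolding bij_betw_def by simp
    also have "\<dots> \<subseteq> \<chi> ` ((\<lambda>f. compose (univ A) g f) ` Emb L ar A K)"
    proof
      fix y assume "y \<in> idx ` E"
      then obtain B where B: "B \<in> E" and y: "y = idx B" by blast
      have "E \<subseteq> (\<lambda>f. pullback Lstar ar Ks A f) ` ((\<lambda>f. compose (univ A) g f) ` Emb L ar A K)"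
        using cov g by blast
      then obtain h where h: "h \<in> (\<lambda>f. compose (univ A) g f) ` Emb L ar A K"
        and Bh: "B = pullback Lstar ar Ks A h" using B by blast
      have "y = \<chi> h" unfolding \<chi>_def using y Bh by simp
      then show "y \<in> \<chi> ` ((\<lambda>f. compose (univ A) g f) ` Emb L ar A K)" using h by blast
    qed
    finally have "card {0..<card E} \<le> card (\<chi> ` ((\<lambda>f. compose (univ A) g f) ` Emb L ar A K))"
      using sub1 by (intro card_mono) (auto intro: finite_subset)
    then show False using cg t by simp
  qed
  have "BRD L ar A K = card E" unfolding BRD_def
    by (rule Least_equality) (use ub lb in \<open>auto simp: not_less[symmetric]\<close>)
  then show ?thesis using ub cov by blast
qed

theorem proposition2p8:
  fixes L Lstar :: "'r set" and ar :: "'r \<Rightarrow> nat"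
    and K Ks :: "('a, 'r) struc"
  assumes "L \<subseteq> Lstar"
    and "fraisse L ar K"
    and "expansion L Lstar ar Ks K"
    and "recurrent L Lstar ar Ks K"
    and "precompact L Lstar ar Ks K"
    and "\<forall>As. substr Lstar ar As Ks \<and> finite (univ As) \<longrightarrow> arrow2 Lstar ar Ks Ks As"
  shows "finite_BRD L ar K \<and> big_ramsey_structure L Lstar ar Ks K \<and>
         (\<forall>A. substr L ar A K \<and> finite (univ A) \<longrightarrow>
              BRD L ar A K = card (expansions_in L Lstar ar Ks A))"
proof -
  have wK: "wf_struc L ar K" using assms(2) unfolding fraisse_def by blast
  note M = main_A[OF assms(1) wK assms(3-6)]
  have "finite_BRD L ar K" unfolding finite_BRD_def using M by blast
  moreover have "big_ramsey_structure L Lstar ar Ks K"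
    unfolding big_ramsey_structure_def using M assms(3) by simp
  moreover have "\<forall>A. substr L ar A K \<and> finite (univ A) \<longrightarrow>
              BRD L ar A K = card (expansions_in L Lstar ar Ks A)" using M by simp
  ultimately show ?thesis by blast
qed

end
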